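(* Let $\mathcal N=(\mathcal L,\mathcal I,D_{\mathcal L})$ be a network (with a general collision profile) of character $D^*$. (i) If $S$ is a collision-free framed schedule of frame length $T_F\ge 3D^*+1$ whose rate vector $R_S$ exists, then $R_S\in(1-D^*/T_F)\,\widetilde{\mathcal R}^{(\mathcal L,\mathcal I)}$, and hence $R_S\in\widetilde{\mathcal R}^{(\mathcal L,\mathcal I)}$. (ii) For every $R\in\widetilde{\mathcal R}^{(\mathcal L,\mathcal I)}$ and every $\epsilon>0$ there exist a frame length $T_F$ and a collision-free framed schedule $S$ of frame length $T_F$ whose rate vector exists and satisfies $R_S(l)\ge R(l)-\epsilon$ for all $l$.
   Context: A network is a triple $\mathcal N=(\mathcal L,\mathcal I,D_{\mathcal L})$ where $\mathcal L$ is a finite nonempty set of links, each $\mathcal I(l)$ is a collection of nonempty subsets of $\mathcal L$, and $D_{\mathcal L}$ assigns an integer $D_{\mathcal L}(l,l')$ to every pair with $l'\in\phi$ for some $\phi\in\mathcal I(l)$. The character is $D^*=\max_{l}\max_{\phi\in\mathcal I(l)}\max_{l'\in\phi}|D_{\mathcal L}(l,l')|$ (0 if there are no collision sets). A schedule is a map $S:\mathcal L\times\mathbb Z\to\{0,1\}$; $S(l,t)$ has a collision if there is $\phi\in\mathcal I(l)$ with $S(l',t+D_{\mathcal L}(l,l'))=1$ for all $l'\in\phi$; $S$ is collision free if no $(l,t)$ with $S(l,t)=1$ has a collision. $R_S(l)=\lim_{T\to\infty}\frac1T\sum_{t=0}^{T-1}\iota\big(S(l,t)=1\text{ and collision free}\big)$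 when the limit exists; $R_S=(R_S(l))_l$ is the rate vector when all limits exist. For an integer $T_F\ge D^*+1$, a framed schedule of frame length $T_F$ is a schedule $S$ with $S(l,t)=0$ for $t<0$, such that for every $k\ge0$ and every $l$: $S(l,kT_F+i)=0$ for $i=T_F-D^*,\dots,T_F-1$, and the values $S(l,kT_F+i)$, $i=0,\dots,T_F-D^*-1$, are all equal. An independent set of $(\mathcal L,\mathcal I)$ is a subset $A\subseteq\mathcal L$ such that there are no $l\in A$ and $\phi\in\mathcal I(l)$ with $\phi\subseteq A$; $\widetilde{\mathcal R}^{(\mathcal L,\mathcal I)}$ is the convex hull of the indicator vectors (in $\mathbb R^{\mathcal L}$) of all independent sets of $(\mathcal L,\mathcal I)$. *)

theory Defs
  imports "HOL-Analysis.Analysis"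
begin

text \<open>The collision profile I maps each link to a collection of subsets of links;
  D is the offset function (values outside collision sets are irrelevant).
  Schedules are maps 'l => int => bool (True meaning value 1).\<close>

definition network :: "('l::finite \<Rightarrow> 'l set set) \<Rightarrow> bool" where
  "network I \<longleftrightarrow> (\<forall>l. \<forall>\<phi>\<in>I l. \<phi> \<noteq> {})"

definition character :: "('l::finite \<Rightarrow> 'l set set) \<Rightarrow> ('l \<Rightarrow> 'l \<Rightarrow> int) \<Rightarrow> int" where
  "character I D = Max ({0} \<union> {\<bar>D l l'\<bar> | l \<phi> l'. \<phi> \<in> I l \<and> l' \<in> \<phi>})"

definition collision :: "('l \<Rightarrow> 'l set set) \<Rightarrow> ('l \<Rightarrow> 'l \<Rightarrow> int) \<Rightarrow> ('l \<Rightarrow> int \<Rightarrow> bool) \<Rightarrow> 'l \<Rightarrow> int \<Rightarrow> bool" where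
  "collision I D S l t \<longleftrightarrow> (\<exists>\<phi>\<in>I l. \<forall>l'\<in>\<phi>. S l' (t + D l l'))"

definition collision_free :: "('l \<Rightarrow> 'l set set) \<Rightarrow> ('l \<Rightarrow> 'l \<Rightarrow> int) \<Rightarrow> ('l \<Rightarrow> int \<Rightarrow> bool) \<Rightarrow> bool" where
  "collision_free I D S \<longleftrightarrow> (\<forall>l t. S l t \<longrightarrow> \<not> collision I D S l t)"

definition avg_rate :: "('l \<Rightarrow> 'l set set) \<Rightarrow> ('l \<Rightarrow> 'l \<Rightarrow> int) \<Rightarrow> ('l \<Rightarrow> int \<Rightarrow> bool) \<Rightarrow> 'l \<Rightarrow> nat \<Rightarrow> real" where
  "avg_rate I D S l T =
     (\<Sum>t<T. if S l (int t) \<and> \<not> collision I D S l (int t) then 1 else 0) / real T"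

definition is_rate_vector :: "('l \<Rightarrow> 'l set set) \<Rightarrow> ('l \<Rightarrow> 'l \<Rightarrow> int) \<Rightarrow> ('l \<Rightarrow> int \<Rightarrow> bool) \<Rightarrow> ('l \<Rightarrow> real) \<Rightarrow> bool" where
  "is_rate_vector I D S R \<longleftrightarrow> (\<forall>l. avg_rate I D S l \<longlonglongrightarrow> R l)"

definition framed_schedule :: "('l::finite \<Rightarrow> 'l set set) \<Rightarrow> ('l \<Rightarrow> 'l \<Rightarrow> int) \<Rightarrow> int \<Rightarrow> ('l \<Rightarrow> int \<Rightarrow> bool) \<Rightarrow> bool" where
  "framed_schedule I D TF S \<longleftrightarrow>
     TF \<ge> character I D + 1 \<and>
     (\<forall>l t. t < 0 \<longrightarrow> \<not> S l t) \<and>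
     (\<forall>k::nat. \<forall>l.
        (\<forall>i. TF - character I D \<le> i \<and> i \<le> TF - 1 \<longrightarrow> \<not> S l (int k * TF + i)) \<and>
        (\<forall>i j. 0 \<le> i \<and> i \<le> TF - character I D - 1 \<and> 0 \<le> j \<and> j \<le> TF - character I D - 1
               \<longrightarrow> S l (int k * TF + i) = S l (int k * TF + j)))"

definition independent_set :: "('l \<Rightarrow> 'l set set) \<Rightarrow> 'l set \<Rightarrow> bool" where
  "independent_set I A \<longleftrightarrow> \<not> (\<exists>l\<in>A. \<exists>\<phi>\<in>I l. \<phi> \<subseteq> A)"

definition indicator_vec :: "'l::finite set \<Rightarrow> real ^ 'l" where
  "indicator_vec A = (\<chi> l. if l \<in> A then 1 else 0)"

definition rate_region :: "('l::finite \<Rightarrow> 'l set set) \<Rightarrow> (real ^ 'l) set" where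
  "rate_region I = convex hull {indicator_vec A | A. independent_set I A}"

end

theory Submission
  imports Defs
begin


lemma char_finite: "finite {\<bar>D l l'\<bar> | l \<phi> l'. \<phi> \<in> (I::'l::finite \<Rightarrow> 'l set set) l \<and> l' \<in> \<phi>}"
proof -
  have "{\<bar>D l l'\<bar> | l \<phi> l'. \<phi> \<in> I l \<and> l' \<in> \<phi>} \<subseteq> (\<lambda>p. \<bar>D (fst p) (snd p)\<bar>) ` UNIV"
  proof
    fix x assume "x \<in> {\<bar>D l l'\<bar> | l \<phi> l'. \<phi> \<in> I l \<and> l' \<in> \<phi>}"
    then obtain l l' where "x = \<bar>D l l'\<bar>" by blast
    thus "x \<in> (\<lambda>p. \<bar>D (fst p) (snd p)\<bar>) ` UNIV" by (intro image_eqI[where x="(l,l')"]) auto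
  qed
  thus ?thesis by (rule finite_subset) simp
qed

lemma char_nonneg: "character I D \<ge> 0"
  unfolding character_def using char_finite[of D I] by (intro Max_ge) auto

lemma char_bound: "\<phi> \<in> I l \<Longrightarrow> l' \<in> \<phi> \<Longrightarrow> \<bar>D l l'\<bar> \<le> character I D"
  unfolding character_def using char_finite[of D I] by (intro Max_ge) auto

lemma framed_val:
  assumes "framed_schedule I D TF S" "0 \<le> i" "i < TF"
  shows "S l (int k * TF + i) = (i < TF - character I D \<and> S l (int k * TF))"
proof -
  note F = assms(1)[unfolded framed_schedule_def]
  show ?thesis
  proof (cases "i < TF - character I D")
    case True
    have "\<forall>i j. 0 \<le> i \<and> i \<le> TF - character I D - 1 \<and> 0 \<le> j \<and> j \<le> TF - character I D - 1
               \<longrightarrow> S l (int k * TF + i) = S l (int k * TF + j)" using F by blast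
    moreover have "0 \<le> i \<and> i \<le> TF - character I D - 1 \<and> 0 \<le> (0::int) \<and> (0::int) \<le> TF - character I D - 1"
      using True assms(2) by linarith
    ultimately have "S l (int k * TF + i) = S l (int k * TF + 0)" by blast
    with True show ?thesis by simp
  next
    case False
    with F assms(3) show ?thesis by auto
  qed
qed

lemma sum_min: "(\<Sum>i<n. if i < m then 1 else 0 :: real) = real (min m n)"
  by (induct n) auto

lemma block_sum:
  assumes "framed_schedule I D TF S"
  shows "(\<Sum>i<nat TF. if S l (int (k * nat TF + i)) then 1 else 0 :: real)
       = real_of_int (TF - character I D) * (if S l (int k * TF) then 1 else 0)"
proof -
  have TF: "TF \<ge> character I D + 1" using assms unfolding framed_schedule_def by simp
  have c0: "character I D \<ge> 0" by (rule char_nonneg)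
  have "(\<Sum>i<nat TF. if S l (int (k * nat TF + i)) then 1 else 0 :: real)
      = (\<Sum>i<nat TF. if i < nat (TF - character I D) \<and> S l (int k * TF) then 1 else 0)"
  proof (rule sum.cong[OF refl])
    fix i assume "i \<in> {..<nat TF}"
    hence i: "int i < TF" by auto
    have e: "int (k * nat TF + i) = int k * TF + int i" using TF c0 by simp
    show "(if S l (int (k * nat TF + i)) then 1 else 0 :: real) =
      (if i < nat (TF - character I D) \<and> S l (int k * TF) then 1 else 0)"
      unfolding e using framed_val[OF assms, of "int i" l k] i by auto
  qed
  also have "\<dots> = real_of_int (TF - character I D) * (if S l (int k * TF) then 1 else 0)"
    using sum_min[where n="nat TF" and m="nat (TF - character I D)"] TF c0 by auto
  finally show ?thesis .
qed

lemma total_sum: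
  assumes "framed_schedule I D TF S"
  shows "(\<Sum>t<K * nat TF. if S l (int t) then 1 else 0 :: real)
       = (\<Sum>k<K. real_of_int (TF - character I D) * (if S l (int k * TF) then 1 else 0))"
proof -
  have "(\<Sum>t<K * nat TF. if S l (int t) then 1 else 0 :: real)
     = (\<Sum>k<K. \<Sum>t\<in>{k * nat TF..<k * nat TF + nat TF}. if S l (int t) then 1 else 0)"
    by (rule sum.nat_group[symmetric])
  also have "\<dots> = (\<Sum>k<K. \<Sum>i<nat TF. if S l (int (k * nat TF + i)) then 1 else 0)"
  proof (rule sum.cong[OF refl])
    fix k
    show "(\<Sum>t\<in>{k * nat TF..<k * nat TF + nat TF}. if S l (int t) then 1 else 0 :: real)
       = (\<Sum>i<nat TF. if S l (int (k * nat TF + i)) then 1 else 0)"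
    proof -
      have eq: "{k * nat TF..<k * nat TF + nat TF} = {0 + k * nat TF..<nat TF + k * nat TF}" by (simp add: add.commute)
      show ?thesis unfolding eq sum.atLeastLessThan_shift_bounds
        by (simp add: lessThan_atLeast0 comp_def)
    qed
  qed
  also have "\<dots> = (\<Sum>k<K. real_of_int (TF - character I D) * (if S l (int k * TF) then 1 else 0))"
    by (intro sum.cong refl block_sum[OF assms])
  finally show ?thesis .
qed

lemma finite_indep: "finite {indicator_vec A | A. independent_set (I::'l::finite \<Rightarrow> 'l set set) A}"
proof -
  have "{indicator_vec A | A. independent_set I A} = indicator_vec ` {A. independent_set I A}" by blast
  thus ?thesis by simp
qed

lemma closed_region: "closed (rate_region I)"
  unfolding rate_region_def
  by (intro compact_imp_closed compact_convex_hull finite_imp_compact finite_indep)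

lemma indep_in_region: "independent_set I A \<Longrightarrow> indicator_vec A \<in> rate_region I"
  unfolding rate_region_def by (rule hull_inc) blast

lemma zero_in_region: "0 \<in> rate_region I"
proof -
  have "indicator_vec {} = (0::real^'a)" unfolding indicator_vec_def by (simp add: vec_eq_iff)
  moreover have "independent_set I {}" unfolding independent_set_def by simp
  ultimately show ?thesis using indep_in_region by metis
qed

lemma frame_indep:
  assumes F: "framed_schedule I D TF S" and T3: "TF \<ge> 3 * character I D + 1"
    and CF: "collision_free I D S"
  shows "independent_set I {l. S l (int k * TF)}"
  unfolding independent_set_def
proof
  assume "\<exists>l\<in>{l. S l (int k * TF)}. \<exists>\<phi>\<in>I l. \<phi> \<subseteq> {l. S l (int k * TF)}"
  then obtain l \<phi> where l: "S l (int k * TF)" and ph: "\<phi> \<in> I l" and sub: "\<phi> \<subseteq> {l. S l (int k * TF)}"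
    by blast
  define c where "c = character I D"
  have c0: "c \<ge> 0" unfolding c_def by (rule char_nonneg)
  have "S l (int k * TF + c)" using framed_val[OF F, of c l k] l c0 T3 unfolding c_def by auto
  moreover have "collision I D S l (int k * TF + c)"
    unfolding collision_def
  proof (intro bexI[OF _ ph] ballI)
    fix l' assume l': "l' \<in> \<phi>"
    have b: "\<bar>D l l'\<bar> \<le> c" unfolding c_def using char_bound[of \<phi> I l l' D] ph l' by blast
    have "S l' (int k * TF + (c + D l l'))"
      using framed_val[OF F, of "c + D l l'" l' k] sub l' b T3 unfolding c_def by auto
    thus "S l' (int k * TF + c + D l l')" by (simp add: add.assoc)
  qed
  ultimately show False using CF unfolding collision_free_def by blast
qed

lemma avg_frames:
  assumes F: "framed_schedule I D TF S" and CF: "collision_free I D S"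
  shows "avg_rate I D S l (K * nat TF) =
    (\<Sum>k<K. real_of_int (TF - character I D) * (if S l (int k * TF) then 1 else 0)) / real (K * nat TF)"
proof -
  have "(\<Sum>t<K * nat TF. if S l (int t) \<and> \<not> collision I D S l (int t) then 1 else 0 :: real)
      = (\<Sum>t<K * nat TF. if S l (int t) then 1 else 0)"
    using CF unfolding collision_free_def by (intro sum.cong) auto
  thus ?thesis unfolding avg_rate_def total_sum[OF F] by simp
qed

lemma part1:
  assumes F: "framed_schedule I D TF S" and T3: "TF \<ge> 3 * character I D + 1"
    and CF: "collision_free I D S" and RV: "is_rate_vector I D S R"
  shows "(\<chi> l. R l) \<in> (\<lambda>x. (1 - real_of_int (character I D) / real_of_int TF) *\<^sub>R x) ` rate_region I \<and>
             (\<chi> l. R l) \<in> rate_region I"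
proof -
  define c where "c = character I D"
  have c0: "c \<ge> 0" unfolding c_def by (rule char_nonneg)
  have TFp: "TF > 0" "TF > c" using T3 c0 unfolding c_def by auto
  define q where "q = 1 - real_of_int c / real_of_int TF"
  have qe: "q = real_of_int (TF - c) / real_of_int TF" unfolding q_def using TFp by (simp add: field_simps)
  have q0: "q > 0" "q \<le> 1" unfolding qe using TFp c0 by auto
  define A where "A k = {l. S l (int k * TF)}" for k :: nat
  have indA: "independent_set I (A k)" for k unfolding A_def c_def
    using frame_indep[OF F T3[folded c_def, unfolded c_def] CF] .
  define w where "w K = (\<Sum>k<K. (1 / real K) *\<^sub>R indicator_vec (A k))" for K
  have w_in: "w K \<in> rate_region I" for K
  proof (cases "K = 0")
    case True thus ?thesis unfolding w_def using zero_in_region by simp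
  next
    case False
    show ?thesis unfolding w_def rate_region_def
      by (rule convex_sum) (use False in \<open>auto intro!: hull_inc simp: indA\<close>)
  qed
  have wl: "w K $ l = (\<Sum>k<K. if S l (int k * TF) then 1 else 0) / real K" for K l
    unfolding w_def indicator_vec_def A_def by (simp add: sum_divide_distrib)
  have lim: "(\<lambda>K. w K $ l) \<longlonglongrightarrow> R l / q" for l
  proof -
    have sm: "strict_mono (\<lambda>K. K * nat TF)" using TFp by (intro strict_monoI) simp
    have "(avg_rate I D S l \<circ> (\<lambda>K. K * nat TF)) \<longlonglongrightarrow> R l"
      using RV unfolding is_rate_vector_def by (intro LIMSEQ_subseq_LIMSEQ[OF _ sm]) auto
    hence 1: "(\<lambda>K. avg_rate I D S l (K * nat TF) / q) \<longlonglongrightarrow> R l / q"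
      by (intro tendsto_divide tendsto_const) (use q0 in \<open>simp_all add: comp_def\<close>)
    have "eventually (\<lambda>K. avg_rate I D S l (K * nat TF) / q = w K $ l) sequentially"
      unfolding eventually_sequentially
    proof (intro exI[of _ 1] allI impI)
      fix K :: nat assume K: "K \<ge> 1"
      have "avg_rate I D S l (K * nat TF) =
        real_of_int (TF - c) * (\<Sum>k<K. if S l (int k * TF) then 1 else 0) / (real K * real_of_int TF)"
        unfolding avg_frames[OF F CF] c_def using TFp by (simp add: sum_distrib_left)
      thus "avg_rate I D S l (K * nat TF) / q = w K $ l"
        unfolding wl qe using TFp K c0 by (simp add: field_simps)
    qed
    thus ?thesis using 1 by (rule Lim_transform_eventually[rotated])
  qed
  define x where "x = (\<chi> l. R l / q)"
  have "(\<lambda>K. w K) \<longlonglongrightarrow> x" unfolding x_def by (rule vec_tendstoI) (simp add: lim)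
  hence x_in: "x \<in> rate_region I" using closed_sequentially[of "rate_region I" w x] closed_region w_in by blast
  have eq: "(\<chi> l. R l) = q *\<^sub>R x" unfolding x_def using q0 by (simp add: vec_eq_iff)
  have "(\<chi> l. R l) = q *\<^sub>R x + (1 - q) *\<^sub>R 0" using eq by simp
  also have "\<dots> \<in> rate_region I"
    using convexD[OF _ x_in zero_in_region, of q "1 - q"] q0 unfolding rate_region_def
    by (simp add: convex_convex_hull)
  finally have "(\<chi> l. R l) \<in> rate_region I" .
  moreover have "(\<chi> l. R l) \<in> (\<lambda>x. q *\<^sub>R x) ` rate_region I" using eq x_in by blast
  ultimately show ?thesis unfolding q_def c_def by blast
qed

lemma periodic_avg:
  fixes f :: "nat \<Rightarrow> real"
  assumes p: "p > 0" and per: "\<And>t. f (t + p) = f t"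
  shows "(\<lambda>T. (\<Sum>t<T. f t) / real T) \<longlonglongrightarrow> (\<Sum>t<p. f t) / real p"
proof -
  define s where "s = (\<Sum>t<p. f t)"
  have g: "(\<Sum>t<T + p. f t) - (\<Sum>t<T. f t) = s" for T
  proof (induct T)
    case 0 thus ?case unfolding s_def by simp
  next
    case (Suc T)
    have "(\<Sum>t<Suc T + p. f t) = (\<Sum>t<T + p. f t) + f (T + p)" by simp
    thus ?case using Suc per[of T] by simp
  qed
  define h where "h T = (\<Sum>t<T. f t) - real T * s / real p" for T
  have h1: "h (T + p) = h T" for T
    unfolding h_def using g[of T] p by (simp add: field_simps)
  have hk: "h (T + k * p) = h T" for T k
  proof (induct k)
    case (Suc k)
    have "h (T + Suc k * p) = h (T + k * p + p)" by (simp add: algebra_simps)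
    thus ?case using h1 Suc by simp
  qed simp
  have hm: "h T = h (T mod p)" for T
    using hk[of "T mod p" "T div p"] by simp
  define B where "B = (\<Sum>t<p. \<bar>h t\<bar>)"
  have hb: "\<bar>h T\<bar> \<le> B" for T
  proof -
    have "\<bar>h (T mod p)\<bar> \<le> B" unfolding B_def
      by (rule member_le_sum[where f="\<lambda>t. \<bar>h t\<bar>"]) (use p in auto)
    thus ?thesis using hm by simp
  qed
  have "(\<lambda>T. h T / real T) \<longlonglongrightarrow> 0"
  proof (rule Lim_null_comparison[OF _ lim_const_over_n[of B]])
    show "\<forall>\<^sub>F T in sequentially. norm (h T / real T) \<le> B / real T"
      using hb by (intro always_eventually allI) (simp add: divide_right_mono)
  qed
  hence "(\<lambda>T. s / real p + h T / real T) \<longlonglongrightarrow> s / real p + 0"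
    by (intro tendsto_add tendsto_const)
  moreover have "eventually (\<lambda>T. s / real p + h T / real T = (\<Sum>t<T. f t) / real T) sequentially"
    unfolding eventually_sequentially
    by (intro exI[of _ 1] allI impI) (use p in \<open>simp add: h_def field_simps\<close>)
  ultimately show ?thesis unfolding s_def[symmetric] by (simp add: Lim_transform_eventually)
qed

definition sched :: "int \<Rightarrow> int \<Rightarrow> (nat \<Rightarrow> 'l set) \<Rightarrow> 'l \<Rightarrow> int \<Rightarrow> bool" where
  "sched TF c g l t \<longleftrightarrow> (0 \<le> t \<and> t mod TF < TF - c \<and> l \<in> g (nat (t div TF)))"

lemma sched_framed:
  assumes "TF \<ge> character I D + 1"
  shows "framed_schedule I D TF (sched TF (character I D) g)"
proof -
  have c0: "character I D \<ge> 0" by (rule char_nonneg)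
  have TF: "TF > 0" using assms c0 by simp
  have dm: "(int k * TF + i) div TF = int k" "(int k * TF + i) mod TF = i" if "0 \<le> i" "i < TF" for k i
    using that TF by (simp_all add: div_pos_pos_trivial mod_pos_pos_trivial)
  show ?thesis unfolding framed_schedule_def
  proof (intro conjI allI impI)
    show "TF \<ge> character I D + 1" by fact
  next
    fix l t assume "t < (0::int)" thus "\<not> sched TF (character I D) g l t" unfolding sched_def by simp
  next
    fix k :: nat and l i assume i: "TF - character I D \<le> i \<and> i \<le> TF - 1"
    hence "0 \<le> i" "i < TF" using c0 TF assms by auto
    thus "\<not> sched TF (character I D) g l (int k * TF + i)" using i dm unfolding sched_def by simp
  next
    fix k :: nat and l i j assume ij: "0 \<le> i \<and> i \<le> TF - character I D - 1 \<and> 0 \<le> j \<and> j \<le> TF - character I D - 1"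
    hence "0 \<le> i" "i < TF" "0 \<le> j" "j < TF" using c0 by auto
    thus "sched TF (character I D) g l (int k * TF + i) = sched TF (character I D) g l (int k * TF + j)"
      using ij dm TF unfolding sched_def by simp
  qed
qed

lemma sched_cf:
  assumes "TF \<ge> character I D + 1" and ind: "\<And>k. independent_set I (g k)"
  shows "collision_free I D (sched TF (character I D) g)"
  unfolding collision_free_def
proof (intro allI impI notI)
  fix l t
  define c where "c = character I D"
  have c0: "c \<ge> 0" unfolding c_def by (rule char_nonneg)
  have TF: "TF > c" using assms c0 unfolding c_def by simp
  assume st: "sched TF (character I D) g l t" and col: "collision I D (sched TF (character I D) g) l t"
  from col obtain \<phi> where ph: "\<phi> \<in> I l" and all: "\<forall>l'\<in>\<phi>. sched TF c g l' (t + D l l')"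
    unfolding collision_def c_def by blast
  define q where "q = t div TF"
  define r where "r = t mod TF"
  have t: "t = q * TF + r" "0 \<le> r" "r < TF - c" "0 \<le> t" "l \<in> g (nat q)"
    using st TF c0 unfolding q_def r_def sched_def c_def by (auto simp: pos_mod_sign)
  have "\<phi> \<subseteq> g (nat q)"
  proof
    fix l' assume l': "l' \<in> \<phi>"
    have b: "\<bar>D l l'\<bar> \<le> c" unfolding c_def using char_bound[of \<phi> I l l' D] ph l' by blast
    have s': "sched TF c g l' (t + D l l')" using all l' by blast
    show "l' \<in> g (nat q)"
    proof (cases "r + D l l' \<ge> 0")
      case True
      have "(t + D l l') div TF = q" using t True b TF
        by (simp add: div_add_self2 div_pos_pos_trivial add.assoc)
      thus ?thesis using s' unfolding sched_def by simp
    next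
      case False
      have e: "t + D l l' = (q - 1) * TF + (TF + r + D l l')" using t by (simp add: algebra_simps)
      have "(t + D l l') mod TF = TF + r + D l l'" unfolding e using False b TF t
        by (simp add: mod_pos_pos_trivial)
      hence "r + D l l' < - c" using s' unfolding sched_def by simp
      thus ?thesis using b t(2) by linarith
    qed
  qed
  thus False using ind[of "nat q"] t ph unfolding independent_set_def by blast
qed

lemma sched_rate:
  assumes TF: "TF \<ge> character I D + 1" and ind: "\<And>k. independent_set I (g k)"
    and P: "P > 0" and per: "\<And>k. g (k + P) = g k"
  shows "is_rate_vector I D (sched TF (character I D) g)
     (\<lambda>l. real_of_int (TF - character I D) * (\<Sum>k<P. if l \<in> g k then 1 else 0) / (real P * real_of_int TF))"
  unfolding is_rate_vector_def
proof
  fix l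
  define c where "c = character I D"
  have c0: "c \<ge> 0" unfolding c_def by (rule char_nonneg)
  have TF0: "TF > 0" using TF c0 unfolding c_def by simp
  let ?S = "sched TF c g"
  have F: "framed_schedule I D TF ?S" unfolding c_def by (rule sched_framed[OF TF])
  have CF: "collision_free I D ?S" unfolding c_def by (rule sched_cf[OF TF ind])
  define f where "f t = (if ?S l (int t) then 1 else 0 :: real)" for t
  have avg: "avg_rate I D ?S l T = (\<Sum>t<T. f t) / real T" for T
    unfolding avg_rate_def f_def using CF unfolding collision_free_def c_def
    by (intro arg_cong2[where f="(/)"] sum.cong refl) auto
  have perf: "f (t + P * nat TF) = f t" for t
  proof -
    have e: "int (t + P * nat TF) = int t + int P * TF" using TF0 by simp
    have m: "(int t + int P * TF) mod TF = int t mod TF" by simp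
    have d: "(int t + int P * TF) div TF = int t div TF + int P" using TF0 by simp
    have n: "nat (int t div TF + int P) = nat (int t div TF) + P" using TF0 by (simp add: nat_add_distrib pos_imp_zdiv_nonneg_iff)
    have "0 \<le> int t + int P * TF" using TF0 by simp
    thus ?thesis unfolding f_def sched_def e m d n per by simp
  qed
  have PT: "P * nat TF > 0" using P TF0 by simp
  have "(\<lambda>T. (\<Sum>t<T. f t) / real T) \<longlonglongrightarrow> (\<Sum>t<P * nat TF. f t) / real (P * nat TF)"
    by (rule periodic_avg[where f=f, OF PT perf])
  moreover have "(\<Sum>t<P * nat TF. f t) = (\<Sum>k<P. real_of_int (TF - c) * (if l \<in> g k then 1 else 0))"
  proof -
    have "(\<Sum>t<P * nat TF. f t) = (\<Sum>k<P. real_of_int (TF - c) * (if ?S l (int k * TF) then 1 else 0))"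
      unfolding f_def c_def using total_sum[OF F[unfolded c_def]] by simp
    also have "\<dots> = (\<Sum>k<P. real_of_int (TF - c) * (if l \<in> g k then 1 else 0))"
      by (intro sum.cong refl) (use TF0 TF in \<open>simp add: sched_def c0 c_def\<close>)
    finally show ?thesis .
  qed
  ultimately show "avg_rate I D (sched TF (character I D) g) l \<longlonglongrightarrow>
    real_of_int (TF - character I D) * (\<Sum>k<P. if l \<in> g k then 1 else 0) / (real P * real_of_int TF)"
    unfolding avg c_def[symmetric] using TF0 by (simp add: sum_distrib_left)
qed

lemma sum_list_frames:
  "sum_list (map h (concat (map (\<lambda>v. replicate (nv v) (Av v)) vs))) =
   sum_list (map (\<lambda>v. real (nv v) * h (Av v)) vs)" for h :: "'a \<Rightarrow> real"
  by (induct vs) (simp_all add: sum_list_replicate)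

lemma sum_nth_list: "(\<Sum>k<length xs. h (xs ! k)) = sum_list (map h xs)" for h :: "'a \<Rightarrow> real"
  by (simp add: sum_list_sum_nth atLeast0LessThan)

lemma final_ineq:
  fixes Y R e q :: real
  assumes "0 \<le> Y" "Y \<le> 1" "Y \<ge> R - e/2" "0 \<le> q" "q \<le> e/2"
  shows "(1 - q) * Y \<ge> R - e"
proof -
  have "q * Y \<le> q" using assms by (simp add: mult_left_le)
  thus ?thesis using assms by (simp add: algebra_simps)
qed

lemma mid_ineq:
  fixes X P N R m e :: real
  assumes "X \<ge> N * R - m" "0 \<le> X" "0 < P" "P \<le> N + 1" "R \<le> 1" "N \<ge> 0"
    "(m + 1) / (N + 1) \<le> e / 2" "m \<ge> 0"
  shows "X / P \<ge> R - e / 2"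
proof -
  have a: "X / P \<ge> (N * R - m) / (N + 1)"
  proof (cases "N * R - m \<ge> 0")
    case True
    have "(N * R - m) / (N + 1) \<le> (N * R - m) / P"
      using True assms by (intro divide_left_mono) auto
    also have "\<dots> \<le> X / P" using assms by (intro divide_right_mono) auto
    finally show ?thesis .
  next
    case False
    hence "(N * R - m) / (N + 1) \<le> 0" using assms by (simp add: divide_nonpos_pos)
    also have "0 \<le> X / P" using assms by simp
    finally show ?thesis .
  qed
  have "(N * R - m) / (N + 1) = R - (R + m) / (N + 1)" using assms by (simp add: field_simps)
  also have "(R + m) / (N + 1) \<le> (m + 1) / (N + 1)" using assms by (intro divide_right_mono) auto
  hence "R - (R + m) / (N + 1) \<ge> R - e / 2" using assms by linarith
  finally show ?thesis using a by linarith
qed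

lemma part2:
  fixes I :: "'l::finite \<Rightarrow> 'l set set" and D :: "'l \<Rightarrow> 'l \<Rightarrow> int"
  assumes RR: "R \<in> rate_region I" and e: "\<epsilon> > 0"
  shows "\<exists>TF S RS. framed_schedule I D TF S \<and> collision_free I D S \<and> is_rate_vector I D S RS \<and>
             (\<forall>l. RS l \<ge> R $ l - \<epsilon>)"
proof -
  define V where "V = {indicator_vec A | A. independent_set I A}"
  have fV: "finite V" unfolding V_def by (rule finite_indep)
  obtain u where u0: "\<And>v. v \<in> V \<Longrightarrow> 0 \<le> u v" and u1: "sum u V = 1"
    and uR: "(\<Sum>v\<in>V. u v *\<^sub>R v) = R"
    using RR unfolding rate_region_def V_def[symmetric] convex_hull_finite[OF fV] by blast
  define Av where "Av v = {l::'l. v $ l = (1::real)}" for v :: "real^'l"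
  have Av: "independent_set I (Av v) \<and> v = indicator_vec (Av v)" if vV: "v \<in> V" for v
  proof -
    obtain A where A: "v = indicator_vec A" "independent_set I A" using vV unfolding V_def by blast
    have "Av v = A" unfolding Av_def A(1) indicator_vec_def by auto
    thus ?thesis using A by simp
  qed
  have Avi: "independent_set I (Av v)" if "v \<in> V" for v using Av[OF that] by blast
  define h where "h l A = (if l \<in> A then 1 else 0 :: real)" for l :: 'l and A
  have Rl: "R $ l = (\<Sum>v\<in>V. u v * h l (Av v))" for l
  proof -
    have "R $ l = (\<Sum>v\<in>V. u v * v $ l)" unfolding uR[symmetric] by simp
    also have "\<dots> = (\<Sum>v\<in>V. u v * h l (Av v))"
    proof (rule sum.cong[OF refl])
      fix v assume "v \<in> V"
      hence e: "v = indicator_vec (Av v)" using Av by blast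
      have "v $ l = indicator_vec (Av v) $ l" using e by (rule arg_cong)
      thus "u v * v $ l = u v * h l (Av v)" by (simp add: indicator_vec_def h_def)
    qed
    finally show ?thesis .
  qed
  have Rle: "R $ l \<le> 1" for l
  proof -
    have "(\<Sum>v\<in>V. u v * h l (Av v)) \<le> (\<Sum>v\<in>V. u v)"
      by (intro sum_mono) (use u0 in \<open>auto simp: h_def\<close>)
    thus ?thesis using Rl u1 by simp
  qed
  define m where "m = real (card V)"
  define N where "N = nat \<lceil>2 * (m + 1) / \<epsilon>\<rceil>"
  have N: "(m + 1) / (real N + 1) \<le> \<epsilon> / 2"
  proof -
    have "real N \<ge> 2 * (m + 1) / \<epsilon>" unfolding N_def by linarith
    hence "real N + 1 \<ge> 2 * (m + 1) / \<epsilon>" by simp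
    hence "(real N + 1) * \<epsilon> \<ge> 2 * (m + 1)" using e by (simp add: field_simps)
    thus ?thesis using e by (simp add: field_simps m_def)
  qed
  define c where "c = character I D"
  have c0: "c \<ge> 0" unfolding c_def by (rule char_nonneg)
  define TF where "TF = c + 1 + \<lceil>2 * real_of_int c / \<epsilon>\<rceil>"
  have "2 * real_of_int c / \<epsilon> \<ge> 0" using c0 e by (simp add: divide_nonneg_pos)
  hence TFc: "TF \<ge> character I D + 1" unfolding TF_def c_def[symmetric] by linarith
  have TF0: "TF > 0" using TFc c0 unfolding c_def by simp
  have qe: "real_of_int c / real_of_int TF \<le> \<epsilon> / 2"
  proof -
    have "real_of_int TF \<ge> 2 * real_of_int c / \<epsilon>" unfolding TF_def using c0 by linarith
    hence "real_of_int TF * \<epsilon> \<ge> 2 * real_of_int c" using e by (simp add: field_simps)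
    thus ?thesis using e TF0 by (simp add: field_simps)
  qed
  define nv where "nv v = nat \<lfloor>u v * real N\<rfloor>" for v
  have nv: "real (nv v) \<le> u v * real N" "real (nv v) \<ge> u v * real N - 1" if "v \<in> V" for v
  proof -
    have p: "u v * real N \<ge> 0" using u0[OF that] by simp
    hence e: "real (nv v) = real_of_int \<lfloor>u v * real N\<rfloor>" unfolding nv_def by simp
    show "real (nv v) \<le> u v * real N" unfolding e by simp
    show "real (nv v) \<ge> u v * real N - 1" unfolding e by linarith
  qed
  obtain vs where vs: "distinct vs" "set vs = V" using finite_distinct_list[OF fV] by blast
  define fl where "fl = {} # concat (map (\<lambda>v. replicate (nv v) (Av v)) vs)"
  define P where "P = length fl"
  have P0: "P > 0" unfolding P_def fl_def by simp
  define g where "g k = fl ! (k mod P)" for k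
  have flind: "independent_set I A" if "A \<in> set fl" for A
    using that Avi vs(2) unfolding fl_def by (auto simp: independent_set_def)
  have ind: "independent_set I (g k)" for k
    unfolding g_def using P0 by (intro flind) (simp add: P_def)
  have per: "g (k + P) = g k" for k unfolding g_def by simp
  have sumfl: "(\<Sum>k<P. hh (g k)) = hh {} + (\<Sum>v\<in>V. real (nv v) * hh (Av v))" for hh :: "'l set \<Rightarrow> real"
  proof -
    have "(\<Sum>k<P. hh (g k)) = (\<Sum>k<length fl. hh (fl ! k))"
      unfolding g_def P_def by (intro sum.cong refl) simp
    also have "\<dots> = hh {} + (\<Sum>v\<in>V. real (nv v) * hh (Av v))"
      unfolding sum_nth_list fl_def using vs
      by (simp add: sum_list_frames sum_list_distinct_conv_sum_set)
    finally show ?thesis .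
  qed
  define S where "S = sched TF (character I D) g"
  define RS where "RS l = real_of_int (TF - character I D) * (\<Sum>k<P. if l \<in> g k then 1 else 0) / (real P * real_of_int TF)" for l
  have F: "framed_schedule I D TF S" unfolding S_def by (rule sched_framed[OF TFc])
  have CF: "collision_free I D S" unfolding S_def by (rule sched_cf[where g=g, OF TFc ind])
  have RV: "is_rate_vector I D S RS" unfolding S_def RS_def by (rule sched_rate[where g=g, OF TFc ind P0 per])
  have "RS l \<ge> R $ l - \<epsilon>" for l
  proof -
    define X where "X = (\<Sum>v\<in>V. real (nv v) * h l (Av v))"
    define Pr where "Pr = 1 + (\<Sum>v\<in>V. real (nv v))"
    have XS: "(\<Sum>k<P. if l \<in> g k then 1 else 0) = X"
      using sumfl[of "h l"] unfolding X_def h_def by simp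
    have PP: "real P = Pr" using sumfl[of "\<lambda>_. 1"] unfolding Pr_def by simp
    have X0: "X \<ge> 0" unfolding X_def h_def by (intro sum_nonneg) auto
    have "X \<le> (\<Sum>v\<in>V. real (nv v))" unfolding X_def h_def by (intro sum_mono) auto
    hence XP: "X \<le> Pr - 1" unfolding Pr_def by simp
    have Pr0: "Pr > 0" using P0 PP by simp
    have PrN: "Pr \<le> real N + 1"
    proof -
      have "(\<Sum>v\<in>V. real (nv v)) \<le> (\<Sum>v\<in>V. u v * real N)" by (intro sum_mono nv(1))
      also have "\<dots> = real N" using u1 by (simp add: sum_distrib_right[symmetric])
      finally show ?thesis unfolding Pr_def by simp
    qed
    have XN: "X \<ge> real N * R $ l - m"
    proof -
      have "(\<Sum>v\<in>V. (u v * real N - 1) * h l (Av v)) \<le> X"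
        unfolding X_def by (intro sum_mono mult_right_mono nv(2)) (auto simp: h_def)
      moreover have "(\<Sum>v\<in>V. (u v * real N - 1) * h l (Av v)) = real N * R $ l - (\<Sum>v\<in>V. h l (Av v))"
        unfolding Rl by (simp add: algebra_simps sum_subtractf sum_distrib_left)
      moreover have "(\<Sum>v\<in>V. h l (Av v)) \<le> (\<Sum>v\<in>V. 1)" by (intro sum_mono) (auto simp: h_def)
      ultimately show ?thesis unfolding m_def by simp
    qed
    have Y: "X / Pr \<ge> R $ l - \<epsilon> / 2"
      by (rule mid_ineq[OF XN X0 Pr0 PrN Rle _ N]) (simp_all add: m_def)
    have Y1: "X / Pr \<le> 1" "X / Pr \<ge> 0" using XP Pr0 X0 by simp_all
    have "RS l = (1 - real_of_int c / real_of_int TF) * (X / Pr)"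
      unfolding RS_def XS PP c_def[symmetric] using TF0 Pr0 by (simp add: field_simps)
    also have "\<dots> \<ge> R $ l - \<epsilon>"
      by (rule final_ineq[OF Y1(2) Y1(1) Y]) (use c0 TF0 qe in auto)
    finally show ?thesis .
  qed
  thus ?thesis using F CF RV by blast
qed


theorem theorem3:
  fixes I :: "'l::finite \<Rightarrow> 'l set set" and D :: "'l \<Rightarrow> 'l \<Rightarrow> int"
  assumes "network I"
  shows "(\<forall>TF S R. framed_schedule I D TF S \<and> TF \<ge> 3 * character I D + 1 \<and>
             collision_free I D S \<and> is_rate_vector I D S R \<longrightarrow>
             (\<chi> l. R l) \<in> (\<lambda>x. (1 - real_of_int (character I D) / real_of_int TF) *\<^sub>R x) ` rate_region I \<and>
             (\<chi> l. R l) \<in> rate_region I)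
       \<and> (\<forall>R \<in> rate_region I. \<forall>\<epsilon>>0. \<exists>TF S RS.
             framed_schedule I D TF S \<and> collision_free I D S \<and> is_rate_vector I D S RS \<and>
             (\<forall>l. RS l \<ge> R $ l - \<epsilon>))"
    using part1[of I D] part2[of _ I] by blast

end
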